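(* Let $U\subseteq\mathrm{Homeo}^+(\mathbb{R})$ and let $\sim$ be an equivalence relation on $\mathbb{R}$ such that: (1) no $\sim$-equivalence class has full measure (i.e., for each class $C$, $\mathbb{R}\setminus C$ has positive outer Lebesgue measure); and (2) for every $(x,y)\in\mathbb{R}^2$ there is $\varphi\in U$ with $\varphi(x)=y$ and $z\sim\varphi(z)$ for all $z\neq x$. Then there is no good $U$-anonymous weak $\mathbb{R}/\sim$-predictor. In fact, for every $U$-anonymous weak $\mathbb{R}/\sim$-predictor $\mathcal{P}$, the function $E:\mathbb{R}\to\mathbb{R}/\sim$, $E(x)=[x]_\sim$, satisfies: the set $\{x:\mathcal{P}(E|_{\mathbb{R}\setminus\{x\}})\neq E(x)\}$ does not have Lebesgue measure zero.
   Context: $\mathrm{Homeo}^+(\mathbb{R})$ is the group of increasing homeomorphisms of $\mathbb{R}$. For a set $S$, a weak $S$-predictor is a function $\mathcal{P}$ from the set of $S$-valued functions $f$ with domain $\mathbb{R}\setminus\{h_f\}$ for some $h_f\in\mathbb{R}$ into $S$. It is good if for every $F:\mathbb{R}\to S$ the set $\{x:\mathcal{P}(F|_{\mathbb{R}\setminus\{x\}})\neq F(x)\}$ has Lebesgue measure zero. It is $U$-anonymous if whenever $f,g$ are such functions with holes $h_f,h_g$, $\varphi\in U$, $\varphi(h_f)=h_g$, and $f=(g\circ\varphi)|_{\mathbb{R}\setminus\{h_f\}}$, then $\mathcal{P}(f)=\mathcal{P}(g)$. *)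

theory Defs
  imports "HOL-Analysis.Analysis"
begin

definition Homeo_plus :: "(real \<Rightarrow> real) set" where
  "Homeo_plus = {\<phi>. (\<exists>\<psi>. homeomorphism UNIV UNIV \<phi> \<psi>) \<and> strict_mono \<phi>}"

definition holed_funs :: "'a set \<Rightarrow> (real \<Rightarrow> 'a option) set" where
  "holed_funs S = {f. (\<exists>h. dom f = UNIV - {h}) \<and> ran f \<subseteq> S}"

definition restr_hole :: "(real \<Rightarrow> 'a) \<Rightarrow> real \<Rightarrow> (real \<Rightarrow> 'a option)" where
  "restr_hole F x = (\<lambda>y. if y = x then None else Some (F y))"

definition weak_predictor :: "'a set \<Rightarrow> ((real \<Rightarrow> 'a option) \<Rightarrow> 'a) \<Rightarrow> bool" where
  "weak_predictor S P \<longleftrightarrow> (\<forall>f \<in> holed_funs S. P f \<in> S)"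

definition good_predictor :: "'a set \<Rightarrow> ((real \<Rightarrow> 'a option) \<Rightarrow> 'a) \<Rightarrow> bool" where
  "good_predictor S P \<longleftrightarrow>
     (\<forall>F :: real \<Rightarrow> 'a. (\<forall>x. F x \<in> S) \<longrightarrow>
        {x. P (restr_hole F x) \<noteq> F x} \<in> null_sets lebesgue)"

definition anonymous_predictor ::
  "(real \<Rightarrow> real) set \<Rightarrow> 'a set \<Rightarrow> ((real \<Rightarrow> 'a option) \<Rightarrow> 'a) \<Rightarrow> bool" where
  "anonymous_predictor U S P \<longleftrightarrow>
     (\<forall>f \<in> holed_funs S. \<forall>g \<in> holed_funs S. \<forall>hf hg. \<forall>\<phi> \<in> U.
        dom f = UNIV - {hf} \<and> dom g = UNIV - {hg} \<and> \<phi> hf = hg \<and>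
        (\<forall>y. y \<noteq> hf \<longrightarrow> f y = g (\<phi> y))
        \<longrightarrow> P f = P g)"

end

theory Submission
  imports Defs
begin

theorem lemma5p2:
  fixes U :: "(real \<Rightarrow> real) set" and r :: "(real \<times> real) set"
  assumes "U \<subseteq> Homeo_plus"
    and "equiv UNIV r"
    and "\<forall>C \<in> UNIV // r. outer_measure_of lebesgue (UNIV - C) > 0"
    and "\<forall>x y. \<exists>\<phi> \<in> U. \<phi> x = y \<and> (\<forall>z. z \<noteq> x \<longrightarrow> (z, \<phi> z) \<in> r)"
  shows "\<not> (\<exists>P. weak_predictor (UNIV // r) P \<and> anonymous_predictor U (UNIV // r) P
                 \<and> good_predictor (UNIV // r) P)
         \<and> (\<forall>P. weak_predictor (UNIV // r) P \<and> anonymous_predictor U (UNIV // r) P \<longrightarrow>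
              {x. P (restr_hole (\<lambda>x. r `` {x}) x) \<noteq> r `` {x}} \<notin> null_sets lebesgue)"
proof -
  define E where "E = (\<lambda>x::real. r `` {x})"
  have Ein: "E x \<in> UNIV // r" for x unfolding E_def by (rule quotientI) simp
  have dom: "dom (restr_hole E x) = UNIV - {x}" for x
    by (auto simp: restr_hole_def dom_def)
  have hol: "restr_hole E x \<in> holed_funs (UNIV // r)" for x
    unfolding holed_funs_def using dom[of x] Ein
    by (auto simp: ran_def restr_hole_def split: if_splits)
  have main: "{x. P (restr_hole E x) \<noteq> E x} \<notin> null_sets lebesgue"
    if wp: "weak_predictor (UNIV // r) P" and an: "anonymous_predictor U (UNIV // r) P" for P
  proof -
    have const: "P (restr_hole E x) = P (restr_hole E 0)" for x
    proof -
      obtain \<phi> where \<phi>: "\<phi> \<in> U" "\<phi> x = 0" "\<forall>z. z \<noteq> x \<longrightarrow> (z, \<phi> z) \<in> r"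
        using assms(4) by blast
      have sm: "strict_mono \<phi>" using \<phi>(1) assms(1) by (auto simp: Homeo_plus_def)
      hence inj: "inj \<phi>" by (rule strict_mono_imp_inj_on)
      have "\<forall>y. y \<noteq> x \<longrightarrow> restr_hole E x y = restr_hole E 0 (\<phi> y)"
      proof (intro allI impI)
        fix y assume "y \<noteq> x"
        hence ne: "\<phi> y \<noteq> 0" using inj \<phi>(2) by (metis injD)
        have "(y, \<phi> y) \<in> r" using \<phi>(3) \<open>y \<noteq> x\<close> by blast
        hence "E y = E (\<phi> y)" unfolding E_def by (rule equiv_class_eq[OF assms(2)])
        thus "restr_hole E x y = restr_hole E 0 (\<phi> y)"
          using ne \<open>y \<noteq> x\<close> by (simp add: restr_hole_def)
      qed
      thus ?thesis using an[unfolded anonymous_predictor_def, rule_format,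
          OF hol[of x] hol[of 0] \<phi>(1), of x] dom[of x] dom[of 0] \<phi>(2) by simp
    qed
    define c where "c = P (restr_hole E 0)"
    have c: "c \<in> UNIV // r" using wp hol unfolding weak_predictor_def c_def by blast
    then obtain a where a: "c = r `` {a}" by (auto elim: quotientE)
    have "{x. P (restr_hole E x) \<noteq> E x} = UNIV - c"
    proof -
      have "E x = c \<longleftrightarrow> x \<in> c" for x
        unfolding a E_def
      proof (rule iffI)
        assume "r `` {x} = r `` {a}"
        thus "x \<in> r `` {a}" using equiv_class_self[OF assms(2), of x] by simp
      next
        assume "x \<in> r `` {a}"
        hence "(a, x) \<in> r" by simp
        thus "r `` {x} = r `` {a}" by (rule equiv_class_eq[OF assms(2), symmetric])
      qed
      thus ?thesis using const unfolding c_def by auto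
    qed
    moreover have "outer_measure_of lebesgue (UNIV - c) > 0" using assms(3) c by blast
    ultimately show ?thesis
    proof (intro notI)
      assume "outer_measure_of lebesgue (UNIV - c) > 0" "{x. P (restr_hole E x) \<noteq> E x} = UNIV - c"
        "{x. P (restr_hole E x) \<noteq> E x} \<in> null_sets lebesgue"
      hence N: "UNIV - c \<in> null_sets lebesgue" by simp
      hence "outer_measure_of lebesgue (UNIV - c) = 0"
        using outer_measure_of_eq[OF null_setsD2[OF N]] null_setsD1[OF N] by simp
      thus False using \<open>outer_measure_of lebesgue (UNIV - c) > 0\<close> by simp
    qed
  qed
  show ?thesis
  proof
    show "\<not> (\<exists>P. weak_predictor (UNIV // r) P \<and> anonymous_predictor U (UNIV // r) P
                 \<and> good_predictor (UNIV // r) P)"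
    proof
      assume "\<exists>P. weak_predictor (UNIV // r) P \<and> anonymous_predictor U (UNIV // r) P
                 \<and> good_predictor (UNIV // r) P"
      then obtain P where P: "weak_predictor (UNIV // r) P" "anonymous_predictor U (UNIV // r) P"
                 "good_predictor (UNIV // r) P" by blast
      have "{x. P (restr_hole E x) \<noteq> E x} \<in> null_sets lebesgue"
        using P(3)[unfolded good_predictor_def, rule_format, of E] Ein by simp
      thus False using main[OF P(1,2)] by simp
    qed
    show "\<forall>P. weak_predictor (UNIV // r) P \<and> anonymous_predictor U (UNIV // r) P \<longrightarrow>
              {x. P (restr_hole (\<lambda>x. r `` {x}) x) \<noteq> r `` {x}} \<notin> null_sets lebesgue"
      using main unfolding E_def by simp
  qed
qed

end
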